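(* Let $N>0$. There exists a contractible continuous family of $0$-cycles $F_N: S^1 \rightarrow \mathcal{Z}_0(S^1;\mathbb{Z})$ such that $\mathbf{M}(F_N(x)) \leq 2$ for all $x \in S^1$, and any family of fillings $H:S^1 \rightarrow I_1(S^1;\mathbb{Z})$ with $\partial H(x) = F_N(x)$ for all $x$ satisfies $\mathbf{M}(H(x_0))> N$ for some $x_0 \in S^1$.
   Context: $\mathcal{Z}_0(S^1;\mathbb{Z})$ is the space of flat integral $0$-cycles in the circle with the flat topology, $I_1(S^1;\mathbb{Z})$ the integral $1$-chains, $\mathbf{M}$ mass. A family of fillings means a continuous map $H$. *)

theory Defs
  imports "HOL-Analysis.Analysis"
begin

text \<open>The ambient circle S^1 (standard circle of length 2 pi) is parametrised by the
angle t in [0, 2 pi).  Integral 0-chains are finitely supported integer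
coefficient functions on [0, 2 pi).  Integral 1-chains in S^1 are integer-valued
BV functions (densities w.r.t. arc length); we use the canonical representative:
a 2 pi-periodic integer function, right-continuous (locally constant from the
right) with finitely many jump points per period.\<close>

definition is_chain0 :: "(real \<Rightarrow> int) \<Rightarrow> bool" where
  "is_chain0 T \<longleftrightarrow> finite {t. T t \<noteq> 0} \<and> {t. T t \<noteq> 0} \<subseteq> {0..<2*pi}"

definition mass0 :: "(real \<Rightarrow> int) \<Rightarrow> real" where
  "mass0 T = (\<Sum>t\<in>{t. T t \<noteq> 0}. real_of_int \<bar>T t\<bar>)"

definition jumps1 :: "(real \<Rightarrow> int) \<Rightarrow> real set" where
  "jumps1 g = {t \<in> {0..<2*pi}. \<not> (\<exists>e>0. \<forall>s. \<bar>s - t\<bar> < e \<longrightarrow> g s = g t)}"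

definition is_chain1 :: "(real \<Rightarrow> int) \<Rightarrow> bool" where
  "is_chain1 g \<longleftrightarrow> (\<forall>t. g (t + 2*pi) = g t)
     \<and> (\<forall>t. \<exists>e>0. \<forall>s. t \<le> s \<and> s < t + e \<longrightarrow> g s = g t)
     \<and> finite (jumps1 g)"

definition left_val :: "(real \<Rightarrow> int) \<Rightarrow> real \<Rightarrow> int" where
  "left_val g p = (THE c. \<forall>\<^sub>F s in at_left p. g s = c)"

text \<open>Boundary with the standard (counterclockwise) orientation:
  boundary of the indicator of [a,b) is delta_b - delta_a.\<close>
definition bd1 :: "(real \<Rightarrow> int) \<Rightarrow> (real \<Rightarrow> int)" where
  "bd1 g = (\<lambda>p. if p \<in> {0..<2*pi} then left_val g p - g p else 0)"

definition mass1 :: "(real \<Rightarrow> int) \<Rightarrow> real" where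
  "mass1 g = integral {0..2*pi} (\<lambda>t. real_of_int \<bar>g t\<bar>)"

definition cycles0 :: "(real \<Rightarrow> int) set" where
  "cycles0 = {T. is_chain0 T \<and> (\<exists>S. is_chain1 S \<and> bd1 S = T)}"

definition flat0 :: "(real \<Rightarrow> int) \<Rightarrow> real" where
  "flat0 T = (INF S \<in> {S. is_chain1 S}. mass0 (\<lambda>p. T p - bd1 S p) + mass1 S)"

definition flat_continuous_on :: "'a::metric_space set \<Rightarrow> ('a \<Rightarrow> (real \<Rightarrow> int)) \<Rightarrow> bool" where
  "flat_continuous_on A F \<longleftrightarrow> (\<forall>x\<in>A. \<forall>e>0. \<exists>d>0. \<forall>y\<in>A. dist y x < d \<longrightarrow>
      flat0 (\<lambda>p. F y p - F x p) < e)"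

text \<open>On 1-chains in S^1 the flat norm equals the mass (there are no nonzero
integral 2-currents in S^1).\<close>
definition mass_continuous_on :: "'a::metric_space set \<Rightarrow> ('a \<Rightarrow> (real \<Rightarrow> int)) \<Rightarrow> bool" where
  "mass_continuous_on A H \<longleftrightarrow> (\<forall>x\<in>A. \<forall>e>0. \<exists>d>0. \<forall>y\<in>A. dist y x < d \<longrightarrow>
      mass1 (\<lambda>p. H y p - H x p) < e)"

definition contractible_family :: "complex set \<Rightarrow> (complex \<Rightarrow> (real \<Rightarrow> int)) \<Rightarrow> bool" where
  "contractible_family S F \<longleftrightarrow> (\<exists>G :: real \<times> complex \<Rightarrow> (real \<Rightarrow> int).
      (\<forall>p\<in>{0..1} \<times> S. G p \<in> cycles0) \<and> flat_continuous_on ({0..1} \<times> S) G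
      \<and> (\<forall>x\<in>S. G (0, x) = F x) \<and> (\<exists>c. \<forall>x\<in>S. G (1, x) = c))"

end

theory Submission
  imports Defs
begin


definition wr :: "real \<Rightarrow> real" where "wr t = t - 2*pi * of_int \<lfloor>t/(2*pi)\<rfloor>"
definition E :: "real \<Rightarrow> real \<Rightarrow> int" where "E a t = (if wr t < a then 1 else 0)"
definition Phi :: "real \<Rightarrow> real \<Rightarrow> int" where
  "Phi a p = (if p = a then 1 else 0) - (if p = 0 then 1 else 0)"

lemma wr_range: "0 \<le> wr t \<and> wr t < 2*pi"
proof -
  have p: "2*pi > 0" by simp
  have "of_int \<lfloor>t/(2*pi)\<rfloor> \<le> t/(2*pi)" "t/(2*pi) < of_int \<lfloor>t/(2*pi)\<rfloor> + 1" by linarith+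
  then have "of_int \<lfloor>t/(2*pi)\<rfloor> * (2*pi) \<le> t" "t < (of_int \<lfloor>t/(2*pi)\<rfloor> + 1) * (2*pi)"
    using pos_le_divide_eq[OF p] pos_divide_less_eq[OF p] by blast+
  then show ?thesis unfolding wr_def by (simp add: algebra_simps)
qed

lemma wr_id: "0 \<le> t \<Longrightarrow> t < 2*pi \<Longrightarrow> wr t = t"
proof -
  assume "0 \<le> t" "t < 2*pi"
  then have "\<lfloor>t/(2*pi)\<rfloor> = 0" by (simp add: floor_eq_iff)
  then show ?thesis by (simp add: wr_def)
qed

lemma wr_shift: "wr (t + 2*pi * of_int k) = wr t"
proof -
  have "(t + 2*pi * of_int k)/(2*pi) = t/(2*pi) + of_int k" by (simp add: field_simps)
  then show ?thesis unfolding wr_def by (simp add: algebra_simps)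
qed

lemma wr_decomp: "t = wr t + 2*pi * of_int \<lfloor>t/(2*pi)\<rfloor>"
  by (simp add: wr_def)

lemma wr_mult: "wr (2*pi * of_int k) = 0"
  using wr_shift[of 0 k] wr_id[of 0] by simp

lemma chain1_periodic_nat:
  assumes "is_chain1 g" shows "g (t + 2*pi * real n) = g t"
proof (induction n)
  case (Suc n)
  have "g (t + 2*pi*real (Suc n)) = g ((t + 2*pi * real n) + 2*pi)" by (simp add: algebra_simps)
  also have "\<dots> = g (t + 2*pi * real n)" using assms unfolding is_chain1_def by blast
  finally show ?case using Suc by simp
qed simp

lemma chain1_periodic:
  assumes "is_chain1 g" shows "g (t + 2*pi * of_int k) = g t"
proof (cases "k \<ge> 0")
  case True
  then obtain n where "k = int n" using nonneg_eq_int by blast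
  then show ?thesis using chain1_periodic_nat[OF assms] by simp
next
  case False
  then have "-k \<ge> 0" by simp
  then obtain n where "-k = int n" using nonneg_eq_int by blast
  then have n: "k = - int n" by simp
  have "g (t + 2*pi * of_int k) = g ((t + 2*pi * of_int k) + 2*pi * real n)"
    using chain1_periodic_nat[OF assms] by simp
  also have "\<dots> = g t" using n by simp
  finally show ?thesis .
qed

lemma left_val_eq:
  assumes "\<forall>\<^sub>F s in at_left p. g s = c" shows "left_val g p = c"
  unfolding left_val_def
proof (rule the_equality)
  show "\<forall>\<^sub>F s in at_left p. g s = c" by fact
  fix c' assume "\<forall>\<^sub>F s in at_left p. g s = c'"
  with assms have "\<forall>\<^sub>F s in at_left p. c' = c" by eventually_elim auto
  from eventually_happens[OF this] show "c' = c" by auto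
qed

lemma locconst_const:
  fixes f :: "real \<Rightarrow> int"
  assumes A: "connected A"
    and loc: "\<And>p. p\<in>A \<Longrightarrow> \<exists>e>0. \<forall>s\<in>A. \<bar>s - p\<bar> < e \<longrightarrow> f s = f p"
    and xy: "x\<in>A" "y\<in>A"
  shows "f x = f y"
proof -
  have "(\<lambda>t. real_of_int (f t)) constant_on A"
  proof (rule continuous_discrete_range_constant[OF A])
    show "continuous_on A (\<lambda>t. real_of_int (f t))"
      unfolding continuous_on_iff
    proof (intro ballI allI impI)
      fix p e assume "p \<in> A" "(0::real) < e"
      then obtain d where "d>0" "\<forall>s\<in>A. \<bar>s - p\<bar> < d \<longrightarrow> f s = f p" using loc by blast
      then show "\<exists>d>0. \<forall>x'\<in>A. dist x' p < d \<longrightarrow> dist (real_of_int (f x')) (real_of_int (f p)) < e"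
        using \<open>0 < e\<close> by (auto simp: dist_real_def)
    qed
    fix p assume "p \<in> A"
    show "\<exists>e>0. \<forall>y. y \<in> A \<and> real_of_int (f y) \<noteq> real_of_int (f p) \<longrightarrow> e \<le> norm (real_of_int (f y) - real_of_int (f p))"
      by (rule exI[of _ 1]) (auto simp del: of_int_diff simp add: of_int_diff[symmetric])
  qed
  then show ?thesis using xy unfolding constant_on_def by (metis of_int_eq_iff)
qed



lemma chain1_right:
  assumes "is_chain1 g" shows "\<exists>e>0. \<forall>s. t \<le> s \<and> s < t + e \<longrightarrow> g s = g t"
proof -
  have "\<forall>t. \<exists>e>0. \<forall>s. t \<le> s \<and> s < t + e \<longrightarrow> g s = g t"
    using assms unfolding is_chain1_def by (rule conjunct1[OF conjunct2])
  then show ?thesis by (rule spec)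
qed

lemma chain1_per:
  assumes "is_chain1 g" shows "g (t + 2*pi) = g t"
proof -
  have "\<forall>t. g (t + 2*pi) = g t"
    using assms unfolding is_chain1_def by (rule conjunct1)
  then show ?thesis by (rule spec)
qed

lemma chain1_fin:
  assumes "is_chain1 g" shows "finite (jumps1 g)"
  using assms unfolding is_chain1_def by (rule conjunct2[OF conjunct2])

lemma left_limit_exists:
  assumes g: "is_chain1 g" shows "\<exists>c. \<forall>\<^sub>F s in at_left p. g s = c"
proof -
  define k where "k = \<lceil>p/(2*pi)\<rceil> - 1"
  define u where "u = p - 2*pi * of_int k"
  have p2: "2*pi > 0" by simp
  have "of_int k < p/(2*pi)" "p/(2*pi) \<le> of_int k + 1" unfolding k_def by linarith+
  then have "of_int k * (2*pi) < p" "p \<le> (of_int k + 1) * (2*pi)"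
    using pos_less_divide_eq[OF p2] pos_divide_le_eq[OF p2] by blast+
  then have u: "0 < u" "u \<le> 2*pi" unfolding u_def by (simp_all add: algebra_simps)
  define J where "J = {j \<in> jumps1 g. j < u}"
  have fJ: "finite J" using chain1_fin[OF g] unfolding J_def by auto
  define e where "e = Min (insert u ((\<lambda>j. u - j) ` J))"
  have e0: "e > 0" unfolding e_def using fJ u by (auto simp: J_def)
  have eu: "e \<le> u" unfolding e_def using fJ by simp
  have ej: "e \<le> u - j" if "j \<in> J" for j unfolding e_def using fJ that by simp
  have loc: "\<exists>d>0. \<forall>s'\<in>{u-e<..<u}. \<bar>s' - s\<bar> < d \<longrightarrow> g s' = g s" if s: "s \<in> {u-e<..<u}" for s
  proof -
    have s02: "s \<in> {0..<2*pi}" using s eu u by auto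
    have "s \<notin> J"
    proof
      assume "s \<in> J" then have "e \<le> u - s" by (rule ej)
      with s show False by simp
    qed
    then have "s \<notin> jumps1 g" using s unfolding J_def by auto
    then obtain d where "d>0" "\<forall>s'. \<bar>s' - s\<bar> < d \<longrightarrow> g s' = g s"
      using s02 unfolding jumps1_def by blast
    then show ?thesis by blast
  qed
  define c where "c = g (u - e/2)"
  have const: "g s = c" if "s \<in> {u-e<..<u}" for s
    unfolding c_def
  proof (rule locconst_const[of "{u-e<..<u}"])
    show "connected {u-e<..<u}" by simp
    show "\<And>q. q \<in> {u - e<..<u} \<Longrightarrow> \<exists>d>0. \<forall>s\<in>{u - e<..<u}. \<bar>s - q\<bar> < d \<longrightarrow> g s = g q"
      using loc by blast
    show "s \<in> {u-e<..<u}" by fact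
    show "u - e/2 \<in> {u-e<..<u}" using e0 by simp
  qed
  have "\<forall>\<^sub>F s in at_left p. s \<in> {p - e<..<p}" using eventually_at_left_real e0 by simp
  then have "\<forall>\<^sub>F s in at_left p. g s = c"
  proof eventually_elim
    case (elim s)
    have "g s = g ((s - 2*pi * of_int k) + 2*pi * of_int k)" by simp
    also have "\<dots> = g (s - 2*pi * of_int k)" by (rule chain1_periodic[OF g])
    also have "\<dots> = c" using elim by (intro const) (simp add: u_def algebra_simps)
    finally show ?case .
  qed
  then show ?thesis by (rule exI)
qed

lemma left_val_ev:
  assumes g: "is_chain1 g" shows "\<forall>\<^sub>F s in at_left p. g s = left_val g p"
proof -
  obtain c where c: "\<forall>\<^sub>F s in at_left p. g s = c" using left_limit_exists[OF g] by blast
  with left_val_eq[OF c] show ?thesis by simp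
qed

lemma chain1_const: "is_chain1 (\<lambda>t. c)"
proof -
  have "jumps1 (\<lambda>t. c) = {}" unfolding jumps1_def using zero_less_one by blast
  moreover have "\<exists>e>0. \<forall>s. t \<le> s \<and> s < t + e \<longrightarrow> c = c" for t::real using zero_less_one by blast
  ultimately show ?thesis unfolding is_chain1_def by simp
qed

lemma chain1_diff:
  assumes f: "is_chain1 f" and g: "is_chain1 g" shows "is_chain1 (\<lambda>t. f t - g t)"
proof -
  have per: "\<forall>t. f (t + 2*pi) - g (t + 2*pi) = f t - g t" using chain1_per[OF f] chain1_per[OF g] by simp
  have right: "\<exists>e>0. \<forall>s. t \<le> s \<and> s < t + e \<longrightarrow> f s - g s = f t - g t" for t
  proof -
    from chain1_right[OF f, of t] obtain e1 where e1: "e1>0" "\<forall>s. t \<le> s \<and> s < t + e1 \<longrightarrow> f s = f t" by (elim exE conjE)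
    from chain1_right[OF g, of t] obtain e2 where e2: "e2>0" "\<forall>s. t \<le> s \<and> s < t + e2 \<longrightarrow> g s = g t" by (elim exE conjE)
    have m0: "min e1 e2 > 0" using e1(1) e2(1) by simp
    have "\<forall>s. t \<le> s \<and> s < t + min e1 e2 \<longrightarrow> f s - g s = f t - g t"
    proof (intro allI impI)
      fix s assume s: "t \<le> s \<and> s < t + min e1 e2"
      then have "t \<le> s" "s < t + e1" "s < t + e2" by linarith+
      then have "f s = f t" "g s = g t" using e1(2) e2(2) by blast+
      then show "f s - g s = f t - g t" by simp
    qed
    with m0 show ?thesis by blast
  qed
  have "jumps1 (\<lambda>t. f t - g t) \<subseteq> jumps1 f \<union> jumps1 g"
  proof
    fix t assume t: "t \<in> jumps1 (\<lambda>t. f t - g t)"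
    show "t \<in> jumps1 f \<union> jumps1 g"
    proof (rule ccontr)
      assume "t \<notin> jumps1 f \<union> jumps1 g"
      moreover have t02: "t \<in> {0..<2*pi}" using t unfolding jumps1_def by blast
      ultimately have "\<exists>e>0. \<forall>s. \<bar>s - t\<bar> < e \<longrightarrow> f s = f t" "\<exists>e>0. \<forall>s. \<bar>s - t\<bar> < e \<longrightarrow> g s = g t"
        unfolding jumps1_def by blast+
      then obtain e1 e2 where e1: "e1>0" "\<forall>s. \<bar>s - t\<bar> < e1 \<longrightarrow> f s = f t"
        and e2: "e2>0" "\<forall>s. \<bar>s - t\<bar> < e2 \<longrightarrow> g s = g t" by (elim exE conjE)
      have "\<forall>s. \<bar>s - t\<bar> < min e1 e2 \<longrightarrow> f s - g s = f t - g t"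
      proof (intro allI impI)
        fix s assume "\<bar>s - t\<bar> < min e1 e2"
        then have "\<bar>s - t\<bar> < e1" "\<bar>s - t\<bar> < e2" by linarith+
        then have "f s = f t" "g s = g t" using e1(2) e2(2) by blast+
        then show "f s - g s = f t - g t" by simp
      qed
      moreover have "min e1 e2 > 0" using e1(1) e2(1) by simp
      ultimately show False using t unfolding jumps1_def by blast
    qed
  qed
  then have "finite (jumps1 (\<lambda>t. f t - g t))"
    using chain1_fin[OF f] chain1_fin[OF g] by (meson finite_Un finite_subset)
  then show ?thesis using per right unfolding is_chain1_def by blast
qed

lemma bd1_diff:
  assumes f: "is_chain1 f" and g: "is_chain1 g"
  shows "bd1 (\<lambda>t. f t - g t) = (\<lambda>p. bd1 f p - bd1 g p)"
proof
  fix p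
  have "left_val (\<lambda>t. f t - g t) p = left_val f p - left_val g p"
  proof (rule left_val_eq)
    show "\<forall>\<^sub>F s in at_left p. f s - g s = left_val f p - left_val g p"
      using left_val_ev[OF f, of p] left_val_ev[OF g, of p] by eventually_elim auto
  qed
  then show "bd1 (\<lambda>t. f t - g t) p = bd1 f p - bd1 g p" unfolding bd1_def by simp
qed

lemma bd1_const: "bd1 (\<lambda>t. c) = (\<lambda>p. 0)"
proof
  fix p
  have "left_val (\<lambda>t. c) p = c" by (rule left_val_eq) simp
  then show "bd1 (\<lambda>t. c) p = 0" unfolding bd1_def by simp
qed



lemma wr_local: "0 \<le> s - 2*pi * of_int k \<Longrightarrow> s - 2*pi * of_int k < 2*pi \<Longrightarrow> wr s = s - 2*pi * of_int k"
  using wr_shift[of "s - 2*pi * of_int k" k] wr_id[of "s - 2*pi * of_int k"] by simp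

lemma E_per: "E a (t + 2*pi) = E a t"
  using wr_shift[of t 1] unfolding E_def by simp

lemma E_right: "\<exists>e>0. \<forall>s. t \<le> s \<and> s < t + e \<longrightarrow> E a s = E a t"
proof -
  define k where "k = \<lfloor>t/(2*pi)\<rfloor>"
  define u where "u = wr t"
  have tu: "t = u + 2*pi * of_int k" unfolding u_def k_def by (rule wr_decomp)
  have u: "0 \<le> u" "u < 2*pi" using wr_range unfolding u_def by auto
  have ws: "wr s = u + (s - t)" if "t \<le> s" "s < t + (2*pi - u)" for s
  proof -
    have "0 \<le> s - 2*pi * of_int k" "s - 2*pi * of_int k < 2*pi" using that tu u by linarith+
    then have "wr s = s - 2*pi * of_int k" by (rule wr_local)
    then show ?thesis using tu by simp
  qed
  show ?thesis
  proof (cases "u < a")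
    case True
    have "\<forall>s. t \<le> s \<and> s < t + min (a - u) (2*pi - u) \<longrightarrow> E a s = E a t"
    proof (intro allI impI)
      fix s assume s: "t \<le> s \<and> s < t + min (a - u) (2*pi - u)"
      then have "t \<le> s" "s < t + (2*pi - u)" by auto
      then have "wr s = u + (s - t)" by (rule ws)
      moreover have "s - t < min (a - u) (2*pi - u)" using s by linarith
      then have "s - t < a - u" by simp
      ultimately show "E a s = E a t" using True unfolding E_def u_def by simp
    qed
    moreover have "min (a - u) (2*pi - u) > 0" using True u by simp
    ultimately show ?thesis by blast
  next
    case False
    have "\<forall>s. t \<le> s \<and> s < t + (2*pi - u) \<longrightarrow> E a s = E a t"
    proof (intro allI impI)
      fix s assume s: "t \<le> s \<and> s < t + (2*pi - u)"
      then have "t \<le> s" "s < t + (2*pi - u)" by auto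
      then have "wr s = u + (s - t)" by (rule ws)
      then show "E a s = E a t" using s False unfolding E_def u_def by simp
    qed
    moreover have "2*pi - u > 0" using u by simp
    ultimately show ?thesis by blast
  qed
qed

lemma E_jumps: "jumps1 (E a) \<subseteq> {0, a}"
proof
  fix t assume t: "t \<in> jumps1 (E a)"
  show "t \<in> {0, a}"
  proof (rule ccontr)
    assume na: "t \<notin> {0, a}"
    have t02: "0 \<le> t" "t < 2*pi" using t unfolding jumps1_def by auto
    then have t0: "0 < t" using na by auto
    define e where "e = min (min t (2*pi - t)) \<bar>t - a\<bar>"
    have e0: "e > 0" unfolding e_def using t0 t02 na by auto
    have "\<forall>s. \<bar>s - t\<bar> < e \<longrightarrow> E a s = E a t"
    proof (intro allI impI)
      fix s assume s: "\<bar>s - t\<bar> < e"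
      then have s1: "\<bar>s - t\<bar> < t" "\<bar>s - t\<bar> < 2*pi - t" "\<bar>s - t\<bar> < \<bar>t - a\<bar>" unfolding e_def by auto
      then have "0 \<le> s" "s < 2*pi" by linarith+
      then have "wr s = s" by (rule wr_id)
      moreover have "wr t = t" using t02 by (rule wr_id)
      moreover have "(s < a) = (t < a)" using s1(3) by linarith
      ultimately show "E a s = E a t" unfolding E_def by simp
    qed
    then show False using t e0 unfolding jumps1_def by blast
  qed
qed

lemma chain1_E: "is_chain1 (E a)"
  unfolding is_chain1_def using E_per E_right finite_subset[OF E_jumps] by blast

lemma left_val_E:
  assumes a: "0 \<le> a" "a < 2*pi" and p: "0 \<le> p" "p < 2*pi"
  shows "left_val (E a) p = (if 0 < p \<and> p \<le> a then 1 else 0)"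
proof (rule left_val_eq)
  consider "p = 0" | "0 < p" "p \<le> a" | "0 < p" "a < p" using p by linarith
  then show "\<forall>\<^sub>F s in at_left p. E a s = (if 0 < p \<and> p \<le> a then 1 else 0)"
  proof cases
    case 1
    have "a - 2*pi < p" using a 1 by simp
    from eventually_at_left_real[OF this] show ?thesis
    proof eventually_elim
      case (elim s)
      have "wr s = s - 2*pi * of_int (-1)" using elim 1 a by (intro wr_local) auto
      then show ?case using elim 1 unfolding E_def by simp
    qed
  next
    case 2
    from eventually_at_left_real[OF 2(1)] show ?thesis
    proof eventually_elim
      case (elim s)
      have "wr s = s" using elim p by (intro wr_id) auto
      then show ?case using elim 2 unfolding E_def by simp
    qed
  next
    case 3
    from eventually_at_left_real[OF 3(2)] show ?thesis
    proof eventually_elim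
      case (elim s)
      have "wr s = s" using elim p a by (intro wr_id) auto
      then show ?case using elim 3 unfolding E_def by simp
    qed
  qed
qed

lemma bd1_E:
  assumes a: "0 \<le> a" "a < 2*pi"
  shows "bd1 (E a) = Phi a"
proof
  fix p
  show "bd1 (E a) p = Phi a p"
  proof (cases "0 \<le> p \<and> p < 2*pi")
    case True
    then have "wr p = p" using wr_id by auto
    then show ?thesis using True a left_val_E[OF a, of p] unfolding bd1_def E_def Phi_def by auto
  next
    case False
    then have "p \<noteq> a" "p \<noteq> 0" using a by auto
    then show ?thesis using False unfolding bd1_def Phi_def by auto
  qed
qed



lemma spike:
  assumes "(f has_integral y) T" "\<And>x. x \<in> T - S \<Longrightarrow> g x = f x" "finite S"
  shows "(g has_integral y) T"
  using has_integral_spike_finite[OF assms(3) assms(2) assms(1)] .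

lemma int_ind:
  assumes "0 \<le> al" "al \<le> be" "be \<le> 2*pi"
  shows "((\<lambda>t. if al \<le> t \<and> t < be then 1 else 0::real) has_integral (be - al)) {0..2*pi}"
proof -
  have "((\<lambda>t::real. 1::real) has_integral (be - al)) {al..be}"
    using has_integral_const_real[of "1::real" al be] assms by simp
  moreover have eq: "{al..be} \<inter> {0..2*pi} = {al..be}" using assms by auto
  moreover have "((\<lambda>t. if t \<in> {al..be} then 1 else 0::real) has_integral (be - al)) {0..2*pi}
     \<longleftrightarrow> ((\<lambda>t. 1::real) has_integral (be - al)) ({al..be} \<inter> {0..2*pi})"
    by (rule has_integral_restrict_Int)
  ultimately have "((\<lambda>t. if t \<in> {al..be} then 1 else 0::real) has_integral (be - al)) {0..2*pi}"
    by (simp only: eq)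
  then show ?thesis
    by (rule spike[of _ _ _ "{be}"]) auto
qed

lemma int_E:
  assumes "0 \<le> a" "a < 2*pi"
  shows "((\<lambda>t. real_of_int (E a t)) has_integral a) {0..2*pi}"
proof -
  have "((\<lambda>t. if 0 \<le> t \<and> t < a then 1 else 0::real) has_integral (a - 0)) {0..2*pi}"
    using assms by (intro int_ind) auto
  then have "((\<lambda>t. if 0 \<le> t \<and> t < a then 1 else 0::real) has_integral a) {0..2*pi}" by simp
  then show ?thesis
  proof (rule spike[of _ _ _ "{2*pi}"])
    fix t assume t: "t \<in> {0..2*pi} - {2*pi}"
    then have "wr t = t" by (intro wr_id) auto
    then show "real_of_int (E a t) = (if 0 \<le> t \<and> t < a then 1 else 0)" using t unfolding E_def by auto
  qed simp
qed

lemma int_Ec: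
  assumes "0 \<le> a" "a < 2*pi"
  shows "((\<lambda>t. real_of_int (E a t + c)) has_integral (a + 2*pi*c)) {0..2*pi}"
proof -
  have "((\<lambda>t. real_of_int c) has_integral (2*pi*c)) {0..2*pi}"
    using has_integral_const_real[of "real_of_int c" 0 "2*pi"] by simp
  from has_integral_add[OF int_E[OF assms] this] show ?thesis by simp
qed

lemma mass1_nonneg: "0 \<le> mass1 g"
  unfolding mass1_def
proof (cases "(\<lambda>t. real_of_int \<bar>g t\<bar>) integrable_on {0..2*pi}")
  case True then show "0 \<le> integral {0..2*pi} (\<lambda>t. real_of_int \<bar>g t\<bar>)" by (rule integral_nonneg) simp
next
  case False then show "0 \<le> integral {0..2*pi} (\<lambda>t. real_of_int \<bar>g t\<bar>)" by (simp add: not_integrable_integral)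
qed

lemma mass0_nonneg: "0 \<le> mass0 T"
  unfolding mass0_def by (rule sum_nonneg) simp

lemma flat0_le:
  assumes "is_chain1 S" "bd1 S = T" shows "flat0 T \<le> mass1 S"
proof -
  have "flat0 T \<le> mass0 (\<lambda>p. T p - bd1 S p) + mass1 S"
    unfolding flat0_def
  proof (rule cINF_lower)
    show "bdd_below ((\<lambda>S. mass0 (\<lambda>p. T p - bd1 S p) + mass1 S) ` {S. is_chain1 S})"
      by (rule bdd_belowI2[of _ 0]) (simp add: mass0_nonneg mass1_nonneg)
    show "S \<in> {S. is_chain1 S}" using assms by simp
  qed
  moreover have "mass0 (\<lambda>p. T p - bd1 S p) = 0" using assms unfolding mass0_def by simp
  ultimately show ?thesis by simp
qed

lemma FB:
  assumes ab: "a \<le> b" "b < a + 2*pi"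
  shows "\<exists>S. is_chain1 S \<and> bd1 S = (\<lambda>p. Phi (wr b) p - Phi (wr a) p) \<and> mass1 S = b - a"
proof -
  define m where "m = \<lfloor>a/(2*pi)\<rfloor>"
  define n where "n = \<lfloor>b/(2*pi)\<rfloor>"
  have wa: "wr a = a - 2*pi*m" unfolding wr_def m_def by simp
  have wb: "wr b = b - 2*pi*n" unfolding wr_def n_def by simp
  have ra: "0 \<le> wr a" "wr a < 2*pi" and rb: "0 \<le> wr b" "wr b < 2*pi" using wr_range by auto
  have "m \<le> n" unfolding m_def n_def using ab by (intro floor_mono) (simp add: divide_right_mono)
  moreover have "n \<le> m + 1"
  proof -
    have "b/(2*pi) < a/(2*pi) + 1" using ab by (simp add: field_simps)
    then have "n \<le> \<lfloor>a/(2*pi) + 1\<rfloor>" unfolding n_def by (intro floor_mono) simp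
    then show ?thesis unfolding m_def by simp
  qed
  ultimately consider "n = m" | "n = m + 1" by linarith
  then show ?thesis
  proof cases
    case 1
    define S where "S = (\<lambda>t. E (wr b) t - E (wr a) t)"
    have ch: "is_chain1 S" unfolding S_def by (intro chain1_diff chain1_E)
    have bd: "bd1 S = (\<lambda>p. Phi (wr b) p - Phi (wr a) p)"
      unfolding S_def using bd1_diff[OF chain1_E chain1_E] bd1_E[OF ra] bd1_E[OF rb] by simp
    have le: "wr a \<le> wr b" using wa wb 1 ab by simp
    have "((\<lambda>t. if wr a \<le> t \<and> t < wr b then 1 else 0::real) has_integral (wr b - wr a)) {0..2*pi}"
      using ra rb le by (intro int_ind) auto
    then have "((\<lambda>t. real_of_int \<bar>S t\<bar>) has_integral (wr b - wr a)) {0..2*pi}"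
    proof (rule spike[of _ _ _ "{2*pi}"])
      fix t assume t: "t \<in> {0..2*pi} - {2*pi}"
      then have "wr t = t" by (intro wr_id) auto
      then show "real_of_int \<bar>S t\<bar> = (if wr a \<le> t \<and> t < wr b then 1 else 0)"
        using t le unfolding S_def E_def by auto
    qed simp
    then have "mass1 S = b - a" unfolding mass1_def using wa wb 1 by (simp add: integral_unique)
    then show ?thesis using ch bd by blast
  next
    case 2
    define S where "S = (\<lambda>t. (E (wr b) t - E (wr a) t) - (-1))"
    have ch: "is_chain1 S" unfolding S_def by (intro chain1_diff chain1_E chain1_const)
    have bd: "bd1 S = (\<lambda>p. Phi (wr b) p - Phi (wr a) p)"
    proof -
      have "bd1 S = (\<lambda>p. bd1 (\<lambda>t. E (wr b) t - E (wr a) t) p - bd1 (\<lambda>t. -1::int) p)"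
        unfolding S_def by (rule bd1_diff[OF chain1_diff[OF chain1_E chain1_E] chain1_const])
      also have "\<dots> = (\<lambda>p. Phi (wr b) p - Phi (wr a) p)"
        unfolding bd1_diff[OF chain1_E chain1_E] bd1_const bd1_E[OF ra] bd1_E[OF rb] by simp
      finally show ?thesis .
    qed
    have le: "wr b \<le> wr a" using wa wb 2 ab by (simp add: algebra_simps)
    have "((\<lambda>t. if 0 \<le> t \<and> t < wr b then 1 else 0::real) has_integral (wr b - 0)) {0..2*pi}"
      using ra rb le by (intro int_ind) auto
    moreover have "((\<lambda>t. if wr a \<le> t \<and> t < 2*pi then 1 else 0::real) has_integral (2*pi - wr a)) {0..2*pi}"
      using ra rb le by (intro int_ind) auto
    ultimately have "((\<lambda>t. (if 0 \<le> t \<and> t < wr b then 1 else 0::real) + (if wr a \<le> t \<and> t < 2*pi then 1 else 0))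
        has_integral (wr b - 0 + (2*pi - wr a))) {0..2*pi}" by (rule has_integral_add)
    then have "((\<lambda>t. real_of_int \<bar>S t\<bar>) has_integral (wr b - 0 + (2*pi - wr a))) {0..2*pi}"
    proof (rule spike[of _ _ _ "{2*pi}"])
      fix t assume t: "t \<in> {0..2*pi} - {2*pi}"
      then have "wr t = t" by (intro wr_id) auto
      then show "real_of_int \<bar>S t\<bar> = (if 0 \<le> t \<and> t < wr b then 1 else 0) + (if wr a \<le> t \<and> t < 2*pi then 1 else 0)"
        using t le unfolding S_def E_def by auto
    qed simp
    then have "mass1 S = b - a" unfolding mass1_def using wa wb 2 by (simp add: integral_unique algebra_simps)
    then show ?thesis using ch bd by blast
  qed
qed

lemma FBsym:
  assumes "\<bar>b - a\<bar> < 2*pi"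
  shows "flat0 (\<lambda>p. Phi (wr b) p - Phi (wr a) p) \<le> \<bar>b - a\<bar>"
proof (cases "a \<le> b")
  case True
  then obtain S where "is_chain1 S" "bd1 S = (\<lambda>p. Phi (wr b) p - Phi (wr a) p)" "mass1 S = b - a"
    using FB[of a b] assms by auto
  with flat0_le show ?thesis using True by fastforce
next
  case False
  then obtain S where S: "is_chain1 S" "bd1 S = (\<lambda>p. Phi (wr a) p - Phi (wr b) p)" "mass1 S = a - b"
    using FB[of b a] assms by auto
  define S' where "S' = (\<lambda>t. 0 - S t)"
  have ch: "is_chain1 S'" unfolding S'_def by (intro chain1_diff chain1_const S(1))
  have bd: "bd1 S' = (\<lambda>p. Phi (wr b) p - Phi (wr a) p)"
  proof -
    have "bd1 S' = (\<lambda>p. bd1 (\<lambda>t. 0::int) p - bd1 S p)"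
      unfolding S'_def by (rule bd1_diff[OF chain1_const S(1)])
    also have "\<dots> = (\<lambda>p. Phi (wr b) p - Phi (wr a) p)" unfolding bd1_const S(2) by simp
    finally show ?thesis .
  qed
  have "mass1 S' = mass1 S" unfolding S'_def mass1_def by simp
  then show ?thesis using flat0_le[OF ch bd] S(3) False by simp
qed

lemma flat_cont:
  assumes "continuous_on A \<tau>"
  shows "flat_continuous_on A (\<lambda>x. Phi (wr (\<tau> x)))"
  unfolding flat_continuous_on_def
proof (intro ballI allI impI)
  fix x e assume x: "x \<in> A" and e: "(0::real) < e"
  have "min e (2*pi) > 0" using e by simp
  then obtain d where d: "d > 0" "\<forall>y\<in>A. dist y x < d \<longrightarrow> dist (\<tau> y) (\<tau> x) < min e (2*pi)"
    using assms x unfolding continuous_on_iff by blast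
  have "\<forall>y\<in>A. dist y x < d \<longrightarrow> flat0 (\<lambda>p. Phi (wr (\<tau> y)) p - Phi (wr (\<tau> x)) p) < e"
  proof (intro ballI impI)
    fix y assume y: "y \<in> A" "dist y x < d"
    then have "dist (\<tau> y) (\<tau> x) < min e (2*pi)" using d(2) by blast
    then have "\<bar>\<tau> y - \<tau> x\<bar> < e" "\<bar>\<tau> y - \<tau> x\<bar> < 2*pi" by (auto simp: dist_real_def)
    with FBsym[OF this(2)] show "flat0 (\<lambda>p. Phi (wr (\<tau> y)) p - Phi (wr (\<tau> x)) p) < e" by linarith
  qed
  with d(1) show "\<exists>d>0. \<forall>y\<in>A. dist y x < d \<longrightarrow> flat0 (\<lambda>p. Phi (wr (\<tau> y)) p - Phi (wr (\<tau> x)) p) < e"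
    by blast
qed

lemma K:
  assumes S: "is_chain1 S" and a: "0 \<le> a" "a < 2*pi" and bd: "bd1 S = Phi a"
  shows "\<exists>c. \<forall>t. S t = E a t + c"
proof -
  define D where "D = (\<lambda>t. S t - E a t)"
  have chD: "is_chain1 D" unfolding D_def by (intro chain1_diff S chain1_E)
  have bdD: "bd1 D p = 0" for p
    unfolding D_def using bd1_diff[OF S chain1_E] bd bd1_E[OF a] by simp
  have loc0: "\<exists>e>0. \<forall>s. \<bar>s - p\<bar> < e \<longrightarrow> D s = D p" if p: "0 \<le> p" "p < 2*pi" for p
  proof -
    have lv: "left_val D p = D p" using bdD[of p] p unfolding bd1_def by simp
    have "\<forall>\<^sub>F s in at_left p. D s = D p" using left_val_ev[OF chD, of p] lv by simp
    then obtain b where b: "b < p" "\<forall>y>b. y < p \<longrightarrow> D y = D p"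
      using eventually_at_left[of "p - 1" p] by auto
    obtain e2 where e2: "e2 > 0" "\<forall>s. p \<le> s \<and> s < p + e2 \<longrightarrow> D s = D p"
      using chain1_right[OF chD, of p] by (elim exE conjE)
    have "\<forall>s. \<bar>s - p\<bar> < min (p - b) e2 \<longrightarrow> D s = D p"
    proof (intro allI impI)
      fix s assume s: "\<bar>s - p\<bar> < min (p - b) e2"
      show "D s = D p"
      proof (cases "s < p")
        case True
        then have "s > b" using s by linarith
        then show ?thesis using b(2) True by blast
      next
        case False
        then have "p \<le> s" "s < p + e2" using s by linarith+
        then show ?thesis using e2(2) by blast
      qed
    qed
    moreover have "min (p - b) e2 > 0" using b(1) e2(1) by simp
    ultimately show ?thesis by blast
  qed
  have loc: "\<exists>e>0. \<forall>s\<in>UNIV. \<bar>s - p\<bar> < e \<longrightarrow> D s = D p" for p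
  proof -
    define k where "k = \<lfloor>p/(2*pi)\<rfloor>"
    define q where "q = wr p"
    have pq: "p = q + 2*pi * of_int k" unfolding q_def k_def by (rule wr_decomp)
    have q: "0 \<le> q" "q < 2*pi" using wr_range unfolding q_def by auto
    obtain e where e: "e > 0" "\<forall>s. \<bar>s - q\<bar> < e \<longrightarrow> D s = D q" using loc0[OF q] by (elim exE conjE)
    have "\<forall>s\<in>UNIV. \<bar>s - p\<bar> < e \<longrightarrow> D s = D p"
    proof (intro ballI impI)
      fix s assume s: "\<bar>s - p\<bar> < e"
      have "\<bar>(s - 2*pi * of_int k) - q\<bar> < e" using s pq by simp
      then have 1: "D (s - 2*pi * of_int k) = D q" using e(2) by blast
      have 2: "D s = D (s - 2*pi * of_int k)" using chain1_periodic[OF chD, of "s - 2*pi * of_int k" k] by simp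
      have 3: "D p = D q" using chain1_periodic[OF chD, of q k] pq by simp
      show "D s = D p" using 1 2 3 by simp
    qed
    with e(1) show ?thesis by blast
  qed
  have "D t = D 0" for t
    by (rule locconst_const[of UNIV]) (use loc in auto)
  then have "\<forall>t. S t = E a t + D 0" unfolding D_def by (metis add.commute diff_add_cancel)
  then show ?thesis by blast
qed



lemma int_le_mass:
  assumes I: "((\<lambda>t. real_of_int (g t)) has_integral I) {0..2*pi}" and B: "\<And>t. \<bar>g t\<bar> \<le> B"
  shows "\<bar>I\<bar> \<le> mass1 g"
proof -
  let ?f = "\<lambda>t. real_of_int (g t)"
  have fi: "?f integrable_on {0..2*pi}" using I by blast
  have "?f absolutely_integrable_on {0..2*pi}"
  proof (rule absolutely_integrable_integrable_bound[where g="\<lambda>_. real_of_int B"])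
    fix x
    have "\<bar>g x\<bar> \<le> B" by (rule B)
    then show "norm (?f x) \<le> real_of_int B" by (metis of_int_abs of_int_le_iff real_norm_def)
  next
    show "?f integrable_on {0..2*pi}" by fact
    show "(\<lambda>_. real_of_int B) integrable_on {0..2*pi}" by (rule integrable_const_ivl)
  qed
  then have ni: "(\<lambda>t. norm (?f t)) integrable_on {0..2*pi}" unfolding absolutely_integrable_on_def by blast
  have "norm (integral {0..2*pi} ?f) \<le> integral {0..2*pi} (\<lambda>t. norm (?f t))"
    by (rule integral_norm_bound_integral[OF fi ni]) simp
  moreover have "integral {0..2*pi} ?f = I" using I by (rule integral_unique)
  moreover have "(\<lambda>t. norm (?f t)) = (\<lambda>t. real_of_int \<bar>g t\<bar>)" by auto
  ultimately show ?thesis unfolding mass1_def by simp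
qed

lemma LB:
  fixes N :: real and M :: nat and H :: "complex \<Rightarrow> real \<Rightarrow> int"
  assumes N: "N > 0" "real M \<ge> N"
    and H: "\<forall>x\<in>sphere 0 1. is_chain1 (H x) \<and> bd1 (H x) = Phi (wr (2 * real M * arccos (Re x)))"
    and mc: "mass_continuous_on (sphere 0 1) H"
  shows "\<exists>x0\<in>sphere 0 1. mass1 (H x0) > N"
proof (rule ccontr)
  assume "\<not> ?thesis"
  then have mN: "\<And>x. x \<in> sphere 0 1 \<Longrightarrow> mass1 (H x) \<le> N" by force
  define a where "a = (\<lambda>\<theta>. wr (2 * real M * \<theta>))"
  have ar: "0 \<le> a \<theta>" "a \<theta> < 2*pi" for \<theta> unfolding a_def using wr_range by auto
  have cs: "cis \<theta> \<in> sphere 0 1" for \<theta> by simp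
  have "\<exists>c. \<forall>t. H (cis \<theta>) t = E (a \<theta>) t + c" if th: "\<theta> \<in> {0..pi}" for \<theta>
  proof (rule K)
    show "is_chain1 (H (cis \<theta>))" using H cs by blast
    have "arccos (Re (cis \<theta>)) = \<theta>" using th by (simp add: arccos_cos)
    then show "bd1 (H (cis \<theta>)) = Phi (a \<theta>)" using H cs unfolding a_def by metis
  qed (use ar in auto)
  then obtain c where c: "\<And>\<theta> t. \<theta> \<in> {0..pi} \<Longrightarrow> H (cis \<theta>) t = E (a \<theta>) t + c \<theta>" by metis
  define h where "h = (\<lambda>\<theta>. a \<theta> + 2*pi*c \<theta>)"
  define k where "k = (\<lambda>\<theta>. c \<theta> - \<lfloor>2 * real M * \<theta> / (2*pi)\<rfloor>)"
  have hk: "h \<theta> = 2 * real M * \<theta> + 2*pi*k \<theta>" for \<theta>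
    unfolding h_def k_def a_def wr_def by (simp add: algebra_simps)
  have Hint: "((\<lambda>t. real_of_int (H (cis \<theta>) t)) has_integral h \<theta>) {0..2*pi}" if "\<theta> \<in> {0..pi}" for \<theta>
    using int_Ec[OF ar, of \<theta> "c \<theta>"] c[OF that] unfolding h_def by simp
  have hN: "\<bar>h \<theta>\<bar> \<le> N" if th: "\<theta> \<in> {0..pi}" for \<theta>
  proof -
    have "\<bar>h \<theta>\<bar> \<le> mass1 (H (cis \<theta>))"
    proof (rule int_le_mass[OF Hint[OF th], where B="1 + \<bar>c \<theta>\<bar>"])
      fix t show "\<bar>H (cis \<theta>) t\<bar> \<le> 1 + \<bar>c \<theta>\<bar>" using c[OF th, of t] unfolding E_def by auto
    qed
    also have "\<dots> \<le> N" using mN cs by blast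
    finally show ?thesis .
  qed
  have Mpos: "real M > 0" using N by linarith
  have kloc: "\<exists>e>0. \<forall>s\<in>{0..pi}. \<bar>s - \<theta>\<bar> < e \<longrightarrow> k s = k \<theta>" if th: "\<theta> \<in> {0..pi}" for \<theta>
  proof -
    obtain d1 where d1: "d1 > 0" "\<forall>y\<in>sphere 0 1. dist y (cis \<theta>) < d1 \<longrightarrow> mass1 (\<lambda>p. H y p - H (cis \<theta>) p) < pi"
      using mc cs[of \<theta>] pi_gt_zero unfolding mass_continuous_on_def by blast
    have "continuous_on UNIV (\<lambda>x. cis x)" by (intro continuous_intros)
    then obtain d2 where d2: "d2 > 0" "\<forall>s\<in>UNIV. dist s \<theta> < d2 \<longrightarrow> dist (cis s) (cis \<theta>) < d1"
      using d1(1) unfolding continuous_on_iff by blast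
    define \<eta> where "\<eta> = min d2 (pi / (2 * real M + 1))"
    have eta0: "\<eta> > 0" unfolding \<eta>_def using d2(1) Mpos by simp
    have "\<forall>s\<in>{0..pi}. \<bar>s - \<theta>\<bar> < \<eta> \<longrightarrow> k s = k \<theta>"
    proof (intro ballI impI)
      fix s assume s: "s \<in> {0..pi}" "\<bar>s - \<theta>\<bar> < \<eta>"
      have "dist s \<theta> < d2" using s(2) unfolding \<eta>_def dist_real_def by simp
      then have "dist (cis s) (cis \<theta>) < d1" using d2(2) by blast
      then have m: "mass1 (\<lambda>p. H (cis s) p - H (cis \<theta>) p) < pi" using d1(2) cs by blast
      have "((\<lambda>t. real_of_int (H (cis s) t - H (cis \<theta>) t)) has_integral (h s - h \<theta>)) {0..2*pi}"
        using has_integral_diff[OF Hint[OF s(1)] Hint[OF th]] by simp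
      then have "\<bar>h s - h \<theta>\<bar> \<le> mass1 (\<lambda>p. H (cis s) p - H (cis \<theta>) p)"
      proof (rule int_le_mass[where B="2 + \<bar>c s\<bar> + \<bar>c \<theta>\<bar>"])
        fix t show "\<bar>H (cis s) t - H (cis \<theta>) t\<bar> \<le> 2 + \<bar>c s\<bar> + \<bar>c \<theta>\<bar>"
          using c[OF s(1), of t] c[OF th, of t] unfolding E_def by auto
      qed
      with m have hd: "\<bar>h s - h \<theta>\<bar> < pi" by linarith
      have "\<eta> \<le> pi / (2 * real M + 1)" unfolding \<eta>_def by simp
      then have "\<eta> * (2 * real M + 1) \<le> pi" using Mpos by (simp add: le_divide_eq)
      moreover have "\<bar>s - \<theta>\<bar> * (2 * real M) \<le> \<eta> * (2 * real M)"
        using s(2) Mpos by (intro mult_right_mono) auto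
      ultimately have "\<bar>s - \<theta>\<bar> * (2 * real M) < pi" using eta0 by (simp add: algebra_simps)
      moreover have "2 * real M * s - 2 * real M * \<theta> = (s - \<theta>) * (2 * real M)" by (simp add: algebra_simps)
      moreover have "\<bar>(s - \<theta>) * (2 * real M)\<bar> = \<bar>s - \<theta>\<bar> * (2 * real M)" by (simp add: abs_mult)
      ultimately have "\<bar>2 * real M * s - 2 * real M * \<theta>\<bar> < pi" by simp
      then have "\<bar>2*pi*(k s - k \<theta>)\<bar> < 2*pi" using hd hk[of s] hk[of \<theta>] by (simp add: algebra_simps)
      then have "\<bar>real_of_int (k s - k \<theta>)\<bar> < 1" by (simp add: abs_mult)
      then show "k s = k \<theta>" by linarith
    qed
    with eta0 show ?thesis by blast
  qed
  have "k \<pi> = k 0" if "\<pi> = pi" for \<pi>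
    using that by (intro locconst_const[of "{0..pi}"]) (use kloc in auto)
  then have kk: "k pi = k 0" by simp
  have a0: "a 0 = 0" unfolding a_def using wr_id[of 0] by simp
  have api: "a pi = 0" unfolding a_def using wr_mult[of "int M"] by (simp add: algebra_simps)
  have fl: "\<lfloor>2 * real M * pi / (2*pi)\<rfloor> = int M" by simp
  have "c pi = c 0 + int M" using kk fl unfolding k_def by simp
  moreover have "\<bar>2*pi*c 0\<bar> \<le> N" using hN[of 0] a0 unfolding h_def by simp
  moreover have "\<bar>2*pi*c pi\<bar> \<le> N" using hN[of pi] api unfolding h_def by simp
  ultimately have "2*pi*real M \<le> 2*N" by (simp add: algebra_simps abs_le_iff)
  moreover have "pi * real M > 1 * real M" using Mpos pi_gt3 by (intro mult_strict_right_mono) auto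
  ultimately show False using N by linarith
qed



lemma Phi_supp: "{t. Phi al t \<noteq> 0} \<subseteq> {al, 0}"
  unfolding Phi_def by auto

lemma Phi_cycle:
  assumes "0 \<le> al" "al < 2*pi" shows "Phi al \<in> cycles0"
proof -
  have f: "finite {t. Phi al t \<noteq> 0}" by (rule finite_subset[OF Phi_supp]) simp
  have "{al, 0} \<subseteq> {0..<2*pi}" using assms by simp
  then have "{t. Phi al t \<noteq> 0} \<subseteq> {0..<2*pi}" using Phi_supp[of al] by (rule subset_trans[rotated])
  with f have "is_chain0 (Phi al)" unfolding is_chain0_def by blast
  moreover have "is_chain1 (E al) \<and> bd1 (E al) = Phi al" using chain1_E bd1_E[OF assms] by simp
  ultimately show ?thesis unfolding cycles0_def by blast
qed

lemma Phi_mass: "mass0 (Phi al) \<le> 2"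
proof -
  have "mass0 (Phi al) \<le> of_nat (card {t. Phi al t \<noteq> 0}) * 1"
    unfolding mass0_def
  proof (rule sum_bounded_above)
    fix t show "real_of_int \<bar>Phi al t\<bar> \<le> 1" unfolding Phi_def by auto
  qed
  moreover have "card {t. Phi al t \<noteq> 0} \<le> card {al, 0::real}" by (rule card_mono) (auto simp: Phi_supp)
  moreover have "card {al, 0::real} \<le> 2" by (simp add: card_insert_le_m1)
  ultimately show ?thesis by linarith
qed

theorem proposition3p6:
  fixes N :: real
  assumes "N > 0"
  shows "\<exists>F :: complex \<Rightarrow> (real \<Rightarrow> int).
     (\<forall>x\<in>sphere 0 1. F x \<in> cycles0)
     \<and> flat_continuous_on (sphere 0 1) F
     \<and> contractible_family (sphere 0 1) F
     \<and> (\<forall>x\<in>sphere 0 1. mass0 (F x) \<le> 2)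
     \<and> (\<forall>H :: complex \<Rightarrow> (real \<Rightarrow> int).
          (\<forall>x\<in>sphere 0 1. is_chain1 (H x) \<and> bd1 (H x) = F x)
          \<and> mass_continuous_on (sphere 0 1) H
          \<longrightarrow> (\<exists>x0\<in>sphere 0 1. mass1 (H x0) > N))"
proof -
  define M where "M = nat \<lceil>N\<rceil>"
  have MN: "real M \<ge> N" unfolding M_def by linarith
  define F where "F = (\<lambda>x::complex. Phi (wr (2 * real M * arccos (Re x))))"
  define G where "G = (\<lambda>p::real \<times> complex. Phi (wr (2 * real M * (1 - fst p) * arccos (Re (snd p)))))"
  have re: "-1 \<le> Re x \<and> Re x \<le> 1" if "x \<in> sphere 0 1" for x :: complex
    using abs_Re_le_cmod[of x] that by (simp add: abs_le_iff)
  have c1: "\<forall>x\<in>sphere 0 1. F x \<in> cycles0" unfolding F_def using Phi_cycle wr_range by blast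
  have c2: "flat_continuous_on (sphere 0 1) F" unfolding F_def
    by (intro flat_cont continuous_intros) (use re in auto)
  have c3: "contractible_family (sphere 0 1) F"
    unfolding contractible_family_def
  proof (intro exI conjI)
    show "\<forall>p\<in>{0..1} \<times> sphere 0 1. G p \<in> cycles0" unfolding G_def using Phi_cycle wr_range by blast
    show "flat_continuous_on ({0..1} \<times> sphere 0 1) G" unfolding G_def
      by (intro flat_cont continuous_intros) (use re in auto)
    show "\<forall>x\<in>sphere 0 1. G (0, x) = F x" unfolding G_def F_def by simp
    show "\<forall>x\<in>sphere 0 1. G (1, x) = Phi (wr 0)" unfolding G_def by simp
  qed
  have c4: "\<forall>x\<in>sphere 0 1. mass0 (F x) \<le> 2" unfolding F_def using Phi_mass by blast
  have c5: "\<forall>H :: complex \<Rightarrow> (real \<Rightarrow> int).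
          (\<forall>x\<in>sphere 0 1. is_chain1 (H x) \<and> bd1 (H x) = F x)
          \<and> mass_continuous_on (sphere 0 1) H
          \<longrightarrow> (\<exists>x0\<in>sphere 0 1. mass1 (H x0) > N)"
    unfolding F_def using LB[OF assms MN] by blast
  show ?thesis using c1 c2 c3 c4 c5 by blast
qed

end
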